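(* Let $B$ be a minimum-weight basis of the weighted uncertainty matroid $\mathcal{M}=(E,\mathcal{I},A,w)$ and let $Q$ be a certificate that verifies $B$. Let $e\notin B$ and $e'\in B$ with $L_e=L_{e'}=w_e=w_{e'}$ be such that $e'\in C_e$, where $C_e$ is the fundamental circuit of $e$ with respect to $B$. Then $Q'=(Q\setminus\{e'\})\cup\{e\}$ is a certificate that verifies $B'=(B\cup\{e\})\setminus\{e'\}$.
   Context: A weighted uncertainty matroid $\mathcal{M}=(E,\mathcal{I},A,w)$ consists of a matroid $M=(E,\mathcal{I})$ on a finite set $E$, for each $e\in E$ a non-empty finite union $A_e$ of bounded real intervals (each open or closed), and a weight $w_e\in A_e$. Let $L_e=\inf A_e$, $U_e=\sup A_e$. A minimum-weight basis is a basis of $M$ minimizing the sum of weights. A weight assignment is $w^*:E\to\mathbb{R}$ with $w^*_e\in A_e$, consistent with $Q$ if $w^*_e=w_e$ for $e\in Q$. $Q$ verifies a basis $B$ (is a certificate for $B$) if for every weight assignment consistent with $Q$, $B$ is a minimum-weight basis with respect to it. For a basis $B$ and $f\notin B$, the fundamental circuit of $f$ is the unique circuit contained in $B\cup\{f\}$. *)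

theory Defs
  imports Complex_Main
begin

definition matroid :: "'a set \<Rightarrow> ('a set \<Rightarrow> bool) \<Rightarrow> bool" where
  "matroid E indep \<longleftrightarrow>
     finite E \<and>
     indep {} \<and>
     (\<forall>X. indep X \<longrightarrow> X \<subseteq> E) \<and>
     (\<forall>X Y. indep X \<and> Y \<subseteq> X \<longrightarrow> indep Y) \<and>
     (\<forall>X Y. indep X \<and> indep Y \<and> card X < card Y \<longrightarrow> (\<exists>y\<in>Y - X. indep (insert y X)))"

definition basis :: "'a set \<Rightarrow> ('a set \<Rightarrow> bool) \<Rightarrow> 'a set \<Rightarrow> bool" where
  "basis E indep B \<longleftrightarrow> B \<subseteq> E \<and> indep B \<and> (\<forall>X. X \<subseteq> E \<and> indep X \<and> B \<subseteq> X \<longrightarrow> X = B)"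

definition circuit :: "'a set \<Rightarrow> ('a set \<Rightarrow> bool) \<Rightarrow> 'a set \<Rightarrow> bool" where
  "circuit E indep C \<longleftrightarrow> C \<subseteq> E \<and> \<not> indep C \<and> (\<forall>X. X \<subset> C \<longrightarrow> indep X)"

definition fund_circuit :: "'a set \<Rightarrow> ('a set \<Rightarrow> bool) \<Rightarrow> 'a set \<Rightarrow> 'a \<Rightarrow> 'a set" where
  "fund_circuit E indep B f = (THE C. circuit E indep C \<and> C \<subseteq> insert f B)"

definition oc_interval :: "real set \<Rightarrow> bool" where
  "oc_interval I \<longleftrightarrow> (\<exists>a b. a \<le> b \<and> (I = {a..b} \<or> I = {a<..<b}))"

definition uncertainty_area :: "real set \<Rightarrow> bool" where
  "uncertainty_area S \<longleftrightarrow> S \<noteq> {} \<and> (\<exists>\<I>. finite \<I> \<and> (\<forall>I\<in>\<I>. oc_interval I) \<and> S = \<Union>\<I>)"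

definition weighted_uncertainty_matroid ::
  "'a set \<Rightarrow> ('a set \<Rightarrow> bool) \<Rightarrow> ('a \<Rightarrow> real set) \<Rightarrow> ('a \<Rightarrow> real) \<Rightarrow> bool" where
  "weighted_uncertainty_matroid E indep A w \<longleftrightarrow>
     matroid E indep \<and> (\<forall>e\<in>E. uncertainty_area (A e) \<and> w e \<in> A e)"

definition lower :: "('a \<Rightarrow> real set) \<Rightarrow> 'a \<Rightarrow> real" where
  "lower A e = Inf (A e)"

definition upper :: "('a \<Rightarrow> real set) \<Rightarrow> 'a \<Rightarrow> real" where
  "upper A e = Sup (A e)"

definition min_weight_basis :: "'a set \<Rightarrow> ('a set \<Rightarrow> bool) \<Rightarrow> ('a \<Rightarrow> real) \<Rightarrow> 'a set \<Rightarrow> bool" where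
  "min_weight_basis E indep w B \<longleftrightarrow>
     basis E indep B \<and> (\<forall>B'. basis E indep B' \<longrightarrow> sum w B \<le> sum w B')"

definition consistent_assignment ::
  "'a set \<Rightarrow> ('a \<Rightarrow> real set) \<Rightarrow> ('a \<Rightarrow> real) \<Rightarrow> 'a set \<Rightarrow> ('a \<Rightarrow> real) \<Rightarrow> bool" where
  "consistent_assignment E A w Q w' \<longleftrightarrow> (\<forall>e\<in>E. w' e \<in> A e) \<and> (\<forall>e\<in>Q \<inter> E. w' e = w e)"

definition verifies ::
  "'a set \<Rightarrow> ('a set \<Rightarrow> bool) \<Rightarrow> ('a \<Rightarrow> real set) \<Rightarrow> ('a \<Rightarrow> real) \<Rightarrow> 'a set \<Rightarrow> 'a set \<Rightarrow> bool" where
  "verifies E indep A w Q B \<longleftrightarrow>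
     (\<forall>w'. consistent_assignment E A w Q w' \<longrightarrow> min_weight_basis E indep w' B)"

end

theory Submission
  imports Defs
begin

lemma ua_bdd_below:
  assumes "uncertainty_area S" shows "bdd_below S"
proof -
  obtain II where f: "finite II" and oc: "\<forall>I\<in>II. oc_interval I" and S: "S = \<Union>II"
    using assms unfolding uncertainty_area_def by blast
  have "\<forall>I\<in>II. oc_interval I \<Longrightarrow> bdd_below (\<Union>II)" using f
  proof (induction II rule: finite_induct)
    case empty then show ?case by simp
  next
    case (insert I F)
    then obtain a b where "I = {a..b} \<or> I = {a<..<b}" unfolding oc_interval_def by blast
    then have "bdd_below I" by auto
    then show ?case using insert by (simp add: bdd_below_Un)
  qed
  then show ?thesis using oc S by simp
qed

lemma circuit_exists:
  assumes m: "matroid E indep" and D: "D \<subseteq> E" and nd: "\<not> indep D"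
  shows "\<exists>C. circuit E indep C \<and> C \<subseteq> D"
proof -
  have fin: "finite E" using m unfolding matroid_def by simp
  define P where "P = (\<lambda>n. \<exists>X. X \<subseteq> D \<and> \<not> indep X \<and> card X = n)"
  have ex: "P (card D)" unfolding P_def using nd by auto
  define n where "n = (LEAST n. P n)"
  have "P n" unfolding n_def by (rule LeastI[of P, OF ex])
  then obtain C where C: "C \<subseteq> D" "\<not> indep C" "card C = n"
    unfolding P_def by auto
  have finC: "finite C" using C(1) D fin by (meson finite_subset)
  have "\<forall>X. X \<subset> C \<longrightarrow> indep X"
  proof (intro allI impI)
    fix X assume X: "X \<subset> C"
    show "indep X"
    proof (rule ccontr)
      assume nX: "\<not> indep X"
      have "card X < card C" using finC X by (rule psubset_card_mono)
      moreover have "X \<subseteq> D" using X C(1) by (meson order.trans psubset_imp_subset)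
      then have "P (card X)" unfolding P_def using nX by auto
      then have "n \<le> card X" unfolding n_def by (rule Least_le)
      ultimately show False using C(3) by simp
    qed
  qed
  moreover have "C \<subseteq> E" using C(1) D by (rule order.trans)
  ultimately have "circuit E indep C" unfolding circuit_def using C(2) by simp
  then show ?thesis using C(1) by auto
qed

lemma circuit_unique:
  assumes m: "matroid E indep" and b: "basis E indep B" and e: "e \<in> E" "e \<notin> B"
    and c1: "circuit E indep C1" "C1 \<subseteq> insert e B"
    and c2: "circuit E indep C2" "C2 \<subseteq> insert e B"
  shows "C1 = C2"
proof (rule ccontr)
  assume ne: "C1 \<noteq> C2"
  have fin: "finite E" using m unfolding matroid_def by blast
  have sub: "\<And>X Y. indep X \<Longrightarrow> Y \<subseteq> X \<Longrightarrow> indep Y" using m unfolding matroid_def by blast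
  have aug: "\<And>X Y. indep X \<Longrightarrow> indep Y \<Longrightarrow> card X < card Y \<Longrightarrow> \<exists>y\<in>Y - X. indep (insert y X)"
    using m unfolding matroid_def by blast
  have BE: "B \<subseteq> E" "indep B" using b unfolding basis_def by auto
  have finB: "finite (insert e B)" using BE e fin finite_subset by blast
  have "e \<in> C2"
  proof (rule ccontr)
    assume "e \<notin> C2" then have "C2 \<subseteq> B" using c2 by blast
    then show False using sub BE c2 unfolding circuit_def by blast
  qed
  have "\<not> C1 \<subseteq> C2"
  proof
    assume "C1 \<subseteq> C2" then have "C1 \<subset> C2" using ne by blast
    then show False using c1 c2 unfolding circuit_def by blast
  qed
  then obtain x where x: "x \<in> C1" "x \<notin> C2" by blast
  have xe: "x \<noteq> e" using x \<open>e \<in> C2\<close> by blast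
  have xB: "x \<in> B" using x xe c1 by blast
  define F where "F = {M. C1 - {x} \<subseteq> M \<and> M \<subseteq> insert e B \<and> indep M}"
  have finF: "finite F" unfolding F_def using finB
    by (rule finite_subset[rotated, OF finite_Pow_iff[THEN iffD2]]) blast
  have "C1 - {x} \<subset> C1" using x by blast
  then have "indep (C1 - {x})" using c1 unfolding circuit_def by blast
  then have "C1 - {x} \<in> F" unfolding F_def using c1 by blast
  then have "card ` F \<noteq> {}" by blast
  then have "Max (card ` F) \<in> card ` F" using finF by simp
  then obtain M where M: "M \<in> F" "card M = Max (card ` F)" by auto
  have Mmax: "\<And>M'. M' \<in> F \<Longrightarrow> card M' \<le> card M" using M finF by simp
  have finM: "finite M" using M(1) finB unfolding F_def using finite_subset by blast
  have "card B \<le> card M"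
  proof (rule ccontr)
    assume "\<not> card B \<le> card M"
    then obtain y where y: "y \<in> B - M" "indep (insert y M)"
      using aug[of M B] M(1) BE unfolding F_def by auto
    have "insert y M \<in> F" using y M(1) unfolding F_def by blast
    then have "card (insert y M) \<le> card M" by (rule Mmax)
    then show False using y finM by simp
  qed
  have "x \<notin> M"
  proof
    assume "x \<in> M" then have "C1 \<subseteq> M" using M(1) unfolding F_def by blast
    moreover have "indep M" using M(1) unfolding F_def by blast
    ultimately have "indep C1" using sub by blast
    then show False using c1 unfolding circuit_def by blast
  qed
  then have MS: "M \<subseteq> insert e B - {x}" using M(1) unfolding F_def by blast
  have "card (insert e B - {x}) = card B"
    using xB e(2) finB by (simp add: card_insert_if)
  then have "M = insert e B - {x}"
    using card_seteq[OF _ MS] finB \<open>card B \<le> card M\<close> by simp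
  then have "C2 \<subseteq> M" using c2 x by blast
  moreover have "indep M" using M(1) unfolding F_def by blast
  ultimately have "indep C2" using sub by blast
  then show False using c2 unfolding circuit_def by blast
qed

theorem lemma11:
  fixes E :: "'a set" and indep :: "'a set \<Rightarrow> bool"
    and A :: "'a \<Rightarrow> real set" and w :: "'a \<Rightarrow> real"
    and B Q :: "'a set" and e e' :: 'a
  assumes "weighted_uncertainty_matroid E indep A w"
    and "min_weight_basis E indep w B"
    and "verifies E indep A w Q B"
    and "e \<in> E" and "e \<notin> B" and "e' \<in> B"
    and "lower A e = lower A e'" and "lower A e' = w e" and "w e = w e'"
    and "e' \<in> fund_circuit E indep B e"
  shows "verifies E indep A w ((Q - {e'}) \<union> {e}) ((B \<union> {e}) - {e'})"
proof -
  note wum = assms(1)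
  have m: "matroid E indep" using wum unfolding weighted_uncertainty_matroid_def by blast
  have fin: "finite E" using m unfolding matroid_def by blast
  have sub: "\<And>X Y. indep X \<Longrightarrow> Y \<subseteq> X \<Longrightarrow> indep Y" using m unfolding matroid_def by blast
  have iE: "\<And>X. indep X \<Longrightarrow> X \<subseteq> E" using m unfolding matroid_def by blast
  have aug: "\<And>X Y. indep X \<Longrightarrow> indep Y \<Longrightarrow> card X < card Y \<Longrightarrow> \<exists>y\<in>Y - X. indep (insert y X)"
    using m unfolding matroid_def by blast
  have b: "basis E indep B" using assms(2) unfolding min_weight_basis_def by blast
  have BE: "B \<subseteq> E" "indep B" using b unfolding basis_def by auto
  have finB: "finite B" using BE fin finite_subset by blast
  have ee': "e \<noteq> e'" using assms(5,6) by blast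
  define B' where "B' = (B \<union> {e}) - {e'}"
  have B'eq: "B' = insert e (B - {e'})" unfolding B'_def using ee' by blast
  have cardB': "card B' = card B" unfolding B'eq using finB assms(5,6)
    by (metis card_insert_disjoint card_Suc_Diff1 finite_Diff Diff_iff)
  have indB': "indep B'"
  proof (rule ccontr)
    assume nd: "\<not> indep B'"
    have "B' \<subseteq> E" unfolding B'_def using BE assms(4) by blast
    then obtain C where C: "circuit E indep C" "C \<subseteq> B'" using circuit_exists[OF m _ nd] by blast
    have Cs: "C \<subseteq> insert e B" using C(2) unfolding B'_def by blast
    have "fund_circuit E indep B e = C" unfolding fund_circuit_def
    proof (rule the_equality)
      show "circuit E indep C \<and> C \<subseteq> insert e B" using C Cs by blast
      fix C' assume "circuit E indep C' \<and> C' \<subseteq> insert e B"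
      then show "C' = C" using circuit_unique[OF m b assms(4,5)] C Cs by blast
    qed
    then show False using assms(10) C(2) unfolding B'_def by blast
  qed
  have basB': "basis E indep B'"
    unfolding basis_def
  proof (intro conjI allI impI)
    show "B' \<subseteq> E" using iE indB' by blast
    show "indep B'" by (rule indB')
    fix X assume X: "X \<subseteq> E \<and> indep X \<and> B' \<subseteq> X"
    have finX: "finite X" using X fin finite_subset by blast
    have "\<not> card B < card X"
    proof
      assume "card B < card X"
      then obtain y where y: "y \<in> X - B" "indep (insert y B)" using aug[of B X] BE X by blast
      have "insert y B = B" using b y X unfolding basis_def by blast
      then show False using y by blast
    qed
    then show "X = B'" using card_seteq[OF finX] X cardB' by (metis linorder_not_le)
  qed
  show ?thesis unfolding verifies_def B'_def[symmetric]
  proof (intro allI impI)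
    fix ws assume cs: "consistent_assignment E A w ((Q - {e'}) \<union> {e}) ws"
    define w2 where "w2 = ws(e' := w e')"
    have e'E: "e' \<in> E" using BE assms(6) by blast
    have "consistent_assignment E A w Q w2"
      unfolding consistent_assignment_def w2_def
      using cs wum e'E unfolding consistent_assignment_def weighted_uncertainty_matroid_def
      by auto
    then have mw2: "min_weight_basis E indep w2 B" using assms(3) unfolding verifies_def by blast
    have wse: "ws e = w e" using cs assms(4) unfolding consistent_assignment_def by blast
    have sB: "sum w2 B = sum w2 (B - {e'}) + w e'"
      using finB assms(6) by (simp add: sum.remove w2_def)
    have sB': "sum w2 B' = sum w2 (B - {e'}) + w e"
      unfolding B'eq using finB assms(5) ee' by (simp add: w2_def wse)
    have eqs: "sum ws B' = sum w2 B'"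
      by (rule sum.cong) (auto simp: B'_def w2_def)
    have le: "w2 x \<le> ws x" if "x \<in> E" for x
    proof (cases "x = e'")
      case True
      have "ws e' \<in> A e'" using cs e'E unfolding consistent_assignment_def by blast
      moreover have "uncertainty_area (A e')" using wum e'E
        unfolding weighted_uncertainty_matroid_def by blast
      then have "bdd_below (A e')" by (rule ua_bdd_below)
      ultimately have "Inf (A e') \<le> ws e'" by (rule cInf_lower)
      then show ?thesis using True assms(8,9) unfolding lower_def w2_def by simp
    qed (simp add: w2_def)
    show "min_weight_basis E indep ws B'"
      unfolding min_weight_basis_def
    proof (intro conjI allI impI)
      show "basis E indep B'" by (rule basB')
      fix B2 assume b2: "basis E indep B2"
      have "sum ws B' = sum w2 B" using eqs sB sB' assms(9) by simp
      also have "\<dots> \<le> sum w2 B2" using mw2 b2 unfolding min_weight_basis_def by blast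
      also have "\<dots> \<le> sum ws B2"
        by (rule sum_mono) (use le b2 in \<open>auto simp: basis_def\<close>)
      finally show "sum ws B' \<le> sum ws B2" .
    qed
  qed
qed

end
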